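(* Assume Conditions (A), (P) and (Ah) from the context. Then (i) $\|A_hP_hA^{-1}\|_{\mathcal L(H)}\le C$ and (ii) $\|A_{h,\ell}A_h^{-1}P_h\|_{\mathcal L(H)}\le C$ for $\ell\in\{1,2\}$, with $C$ independent of $h$.
   Context: $(H,(\cdot,\cdot)_H,\|\cdot\|_H)$ is a real Hilbert space with complexification $H_{\mathbb C}$; $C$ denotes generic constants independent of $h$. Condition (A): $A:\mathrm{dom}(A)\subset H\to H$ and $A_\ell:\mathrm{dom}(A_\ell)\subset H\to H$ ($\ell=1,2$) are linear with $A=A_1+A_2$ on $\mathrm{dom}(A_1)\cap\mathrm{dom}(A_2)\subseteq\mathrm{dom}(A)$; $A$ is densely defined, positive and sectorial: there is $\varphi\in(0,\pi/2)$ such that $0$ and $S_\varphi=\{\lambda\in\mathbb C:\varphi<|\arg\lambda|\le\pi\}$ lie in the resolvent set and $\|(A-\lambda I)^{-1}\|_{\mathcal L(H_{\mathbb C})}\le C/|\lambda|$ on $S_\varphi$; $A_\ell A^{-1}$ is a well-defined bounded operator on $H$. Condition (P): $V_h\subset H$ ($h\in I\subset(0,\infty)$) are finite-dimensional subspaces and $P_h:H\to V_h$ bounded projections with $\|(I-P_h)v\|_H\le Ch^2\|Av\|_H$ for $v\in\mathrm{dom}(A)$. Condition (Ah): $V_h$ carries an inner product with norm $\|\cdot\|_{V_h}$, $\|v_h\|_H\le C\|v_h\|_{V_h}$, and $A_h,A_{h,1},A_{h,2}\in\mathcal L(V_h)$ satisfy for all $v_h,w_h\in V_h$, $\ell=1,2$: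 (a) $(A_hv_h,v_h)_H\ge C\|v_h\|^2_{V_h}$; (b) $|(A_hv_h,w_h)_H|\le C\|v_h\|_{V_h}\|w_h\|_{V_h}$; (c) $A_h=A_{h,1}+A_{h,2}$; (d) $(A_{h,\ell}v_h,v_h)_H\ge0$; (e) $\|A_{h,\ell}P_h\|_{\mathcal L(H)}\le Ch^{-2}$; (f) $\|(P_hA_\ell-A_{h,\ell}P_h)v\|_H\le C\|Av\|_H$ for $v\in\mathrm{dom}(A)$; (g) $\|A^{-1}-A_h^{-1}P_h\|_{\mathcal L(H)}\le Ch^2$. Operators on $V_h$ composed with $P_h$ are regarded as operators on $H$; $\|\cdot\|_{\mathcal L(H)}$ is the operator norm with respect to $\|\cdot\|_H$. *)

theory Defs
  imports "HOL-Analysis.Analysis"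
begin

text \<open>A real Hilbert space H is modelled by a type of class real_inner + complete_space.
  Its complexification H_C is modelled by pairs (u,v) standing for u + i v; the product norm
  of Isabelle is sqrt(norm u ^ 2 + norm v ^ 2), the Hilbert norm of the complexification.\<close>

definition lin_on :: "'a::real_vector set \<Rightarrow> ('a \<Rightarrow> 'b::real_vector) \<Rightarrow> bool" where
  "lin_on D T \<longleftrightarrow> subspace D \<and>
     (\<forall>x\<in>D. \<forall>y\<in>D. T (x + y) = T x + T y) \<and> (\<forall>c. \<forall>x\<in>D. T (c *\<^sub>R x) = c *\<^sub>R T x)"

text \<open>The complexified operator A - lambda I acting on u + i v, written as a pair.\<close>
definition cshift :: "('a::real_vector \<Rightarrow> 'a) \<Rightarrow> complex \<Rightarrow> 'a \<times> 'a \<Rightarrow> 'a \<times> 'a" where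
  "cshift A \<mu> z = (A (fst z) - Re \<mu> *\<^sub>R fst z + Im \<mu> *\<^sub>R snd z,
                    A (snd z) - Re \<mu> *\<^sub>R snd z - Im \<mu> *\<^sub>R fst z)"

definition sector :: "real \<Rightarrow> complex set" where
  "sector \<phi> = {\<mu>. \<phi> < \<bar>Arg \<mu>\<bar> \<and> \<bar>Arg \<mu>\<bar> \<le> pi}"

definition opinv :: "'a set \<Rightarrow> ('a \<Rightarrow> 'b) \<Rightarrow> 'b \<Rightarrow> 'a" where
  "opinv D T = the_inv_into D T"

definition condA :: "('a::{real_inner,complete_space} \<Rightarrow> 'a) \<Rightarrow> 'a set \<Rightarrow>
    ('a \<Rightarrow> 'a) \<Rightarrow> 'a set \<Rightarrow> ('a \<Rightarrow> 'a) \<Rightarrow> 'a set \<Rightarrow> bool" where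
  "condA A DA A1 DA1 A2 DA2 \<longleftrightarrow>
     lin_on DA A \<and> lin_on DA1 A1 \<and> lin_on DA2 A2 \<and>
     DA1 \<inter> DA2 \<subseteq> DA \<and> (\<forall>v \<in> DA1 \<inter> DA2. A v = A1 v + A2 v) \<and>
     closure DA = UNIV \<and>
     (\<forall>v\<in>DA. inner (A v) v \<ge> 0) \<and>
     \<comment> \<open>0 lies in the resolvent set\<close>
     bij_betw A DA UNIV \<and> (\<exists>K. \<forall>x. norm (opinv DA A x) \<le> K * norm x) \<and>
     \<comment> \<open>sectoriality\<close>
     (\<exists>\<phi> C. 0 < \<phi> \<and> \<phi> < pi / 2 \<and>
        (\<forall>\<mu>\<in>sector \<phi>. bij_betw (cshift A \<mu>) (DA \<times> DA) UNIV \<and>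
           (\<forall>w. norm (opinv (DA \<times> DA) (cshift A \<mu>) w) \<le> C / cmod \<mu> * norm w))) \<and>
     \<comment> \<open>A_l A^{-1} is a well-defined bounded operator on H\<close>
     (\<forall>x. opinv DA A x \<in> DA1 \<and> opinv DA A x \<in> DA2) \<and>
     (\<exists>K. \<forall>x. norm (A1 (opinv DA A x)) \<le> K * norm x \<and> norm (A2 (opinv DA A x)) \<le> K * norm x)"

definition condP :: "real set \<Rightarrow> (real \<Rightarrow> 'a::{real_inner,complete_space} set) \<Rightarrow>
    (real \<Rightarrow> 'a \<Rightarrow> 'a) \<Rightarrow> ('a \<Rightarrow> 'a) \<Rightarrow> 'a set \<Rightarrow> bool" where
  "condP I V P A DA \<longleftrightarrow>
     I \<subseteq> {0<..} \<and>
     (\<forall>h\<in>I. subspace (V h) \<and> (\<exists>B. finite B \<and> V h = span B) \<and>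
        bounded_linear (P h) \<and> range (P h) \<subseteq> V h \<and> (\<forall>v\<in>V h. P h v = v)) \<and>
     (\<exists>C. \<forall>h\<in>I. \<forall>v\<in>DA. norm (v - P h v) \<le> C * h^2 * norm (A v))"

definition inner_on :: "'a::real_vector set \<Rightarrow> ('a \<Rightarrow> 'a \<Rightarrow> real) \<Rightarrow> bool" where
  "inner_on S ip \<longleftrightarrow>
     (\<forall>x\<in>S. \<forall>y\<in>S. ip x y = ip y x) \<and>
     (\<forall>x\<in>S. \<forall>y\<in>S. \<forall>z\<in>S. ip (x + y) z = ip x z + ip y z) \<and>
     (\<forall>c. \<forall>x\<in>S. \<forall>y\<in>S. ip (c *\<^sub>R x) y = c * ip x y) \<and>
     (\<forall>x\<in>S. x \<noteq> 0 \<longrightarrow> ip x x > 0)"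

definition ipnorm :: "('a \<Rightarrow> 'a \<Rightarrow> real) \<Rightarrow> 'a \<Rightarrow> real" where
  "ipnorm ip v = sqrt (ip v v)"

definition endo_on :: "'a::real_vector set \<Rightarrow> ('a \<Rightarrow> 'a) \<Rightarrow> bool" where
  "endo_on S T \<longleftrightarrow> lin_on S T \<and> T ` S \<subseteq> S"

definition condAh :: "real set \<Rightarrow> (real \<Rightarrow> 'a::{real_inner,complete_space} set) \<Rightarrow>
    (real \<Rightarrow> 'a \<Rightarrow> 'a) \<Rightarrow> (real \<Rightarrow> 'a \<Rightarrow> 'a \<Rightarrow> real) \<Rightarrow>
    (real \<Rightarrow> 'a \<Rightarrow> 'a) \<Rightarrow> (real \<Rightarrow> 'a \<Rightarrow> 'a) \<Rightarrow> (real \<Rightarrow> 'a \<Rightarrow> 'a) \<Rightarrow>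
    ('a \<Rightarrow> 'a) \<Rightarrow> 'a set \<Rightarrow> ('a \<Rightarrow> 'a) \<Rightarrow> ('a \<Rightarrow> 'a) \<Rightarrow> bool" where
  "condAh I V P ip Ah Ah1 Ah2 A DA A1 A2 \<longleftrightarrow>
     (\<forall>h\<in>I. inner_on (V h) (ip h) \<and> endo_on (V h) (Ah h) \<and>
        endo_on (V h) (Ah1 h) \<and> endo_on (V h) (Ah2 h)) \<and>
     (\<exists>C. \<forall>h\<in>I. \<forall>v\<in>V h. norm v \<le> C * ipnorm (ip h) v) \<and>
     \<comment> \<open>(a)\<close>
     (\<exists>C>0. \<forall>h\<in>I. \<forall>v\<in>V h. inner (Ah h v) v \<ge> C * (ipnorm (ip h) v)^2) \<and>
     \<comment> \<open>(b)\<close>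
     (\<exists>C. \<forall>h\<in>I. \<forall>v\<in>V h. \<forall>w\<in>V h.
        \<bar>inner (Ah h v) w\<bar> \<le> C * ipnorm (ip h) v * ipnorm (ip h) w) \<and>
     \<comment> \<open>(c)\<close>
     (\<forall>h\<in>I. \<forall>v\<in>V h. Ah h v = Ah1 h v + Ah2 h v) \<and>
     \<comment> \<open>(d)\<close>
     (\<forall>h\<in>I. \<forall>v\<in>V h. inner (Ah1 h v) v \<ge> 0 \<and> inner (Ah2 h v) v \<ge> 0) \<and>
     \<comment> \<open>(e)\<close>
     (\<exists>C. \<forall>h\<in>I. \<forall>x. norm (Ah1 h (P h x)) \<le> C / h^2 * norm x \<and>
                      norm (Ah2 h (P h x)) \<le> C / h^2 * norm x) \<and>
     \<comment> \<open>(f)\<close>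
     (\<exists>C. \<forall>h\<in>I. \<forall>v\<in>DA. norm (P h (A1 v) - Ah1 h (P h v)) \<le> C * norm (A v) \<and>
                          norm (P h (A2 v) - Ah2 h (P h v)) \<le> C * norm (A v)) \<and>
     \<comment> \<open>(g)\<close>
     (\<exists>C. \<forall>h\<in>I. \<forall>x. norm (opinv DA A x - opinv (V h) (Ah h) (P h x)) \<le> C * h^2 * norm x)"

end

theory Submission
  imports Defs
begin

lemma fd_surj:
  fixes g :: "'a::real_vector \<Rightarrow> 'a"
  assumes lg: "linear g" and VB: "V = span B0" and fB: "finite B0"
    and inj: "inj_on g V" and sub: "g ` V \<subseteq> V"
  shows "g ` V = V"
proof (rule ccontr)
  assume "g ` V \<noteq> V"
  with sub obtain y where yV: "y \<in> V" and yn: "y \<notin> g ` V" by blast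
  obtain B where B: "B \<subseteq> V" "independent B" "V \<subseteq> span B" "card B = dim V"
    using basis_exists[of V] by blast
  have spB: "span B = V"
    using B VB by (metis span_minimal subspace_span antisym)
  have fin: "finite B"
    using independent_span_bound[OF fB B(2)] B(1) VB by auto
  have injB: "inj_on g (span B)" using inj spB by simp
  have indT: "independent (g ` B)"
    using linear_dependent_inj_imageD[OF lg _ injB] B(2) by blast
  have spT: "span (g ` B) = g ` V"
    using linear_span_image[OF lg] spB by simp
  have ynT: "y \<notin> span (g ` B)" using spT yn by simp
  have ind2: "independent (insert y (g ` B))"
    using indT ynT by (simp add: independent_insert)
  have sub2: "insert y (g ` B) \<subseteq> span B"
    using yV sub spB span_superset by blast
  have "card (insert y (g ` B)) \<le> card B"
    using independent_span_bound[OF fin ind2 sub2] by simp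
  moreover have "card (insert y (g ` B)) = card B + 1"
  proof -
    have "y \<notin> g ` B" using ynT span_superset by blast
    moreover have "card (g ` B) = card B"
      using card_image inj_on_subset[OF injB span_superset] by blast
    ultimately show ?thesis using fin by simp
  qed
  ultimately show False by simp
qed

lemma le_max0: "(a::real) \<le> C * b \<Longrightarrow> 0 \<le> b \<Longrightarrow> a \<le> max C 0 * b"
  by (smt (verit) mult_right_mono max.cobounded1)

lemma resolvent_exists:
  assumes cA: "condA A DA A1 DA1 A2 DA2" and s: "s > 0"
  shows "\<exists>y\<in>DA. A y + s *\<^sub>R y = z"
proof -
  from cA obtain \<phi> C where ph: "0 < \<phi>" "\<phi> < pi / 2"
    and sec: "\<forall>\<mu>\<in>sector \<phi>. bij_betw (cshift A \<mu>) (DA \<times> DA) UNIV"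
    unfolding condA_def by blast
  let ?mu = "complex_of_real (- s)"
  have ar: "Arg ?mu = pi" using s by (subst Arg_of_real) simp
  have "?mu \<in> sector \<phi>" unfolding sector_def using ph ar by simp
  with sec have "bij_betw (cshift A ?mu) (DA \<times> DA) UNIV" by blast
  then have "(z, 0) \<in> cshift A ?mu ` (DA \<times> DA)" by (simp add: bij_betw_def)
  then obtain u v where uv: "u \<in> DA" "v \<in> DA" "cshift A ?mu (u, v) = (z, 0)" by auto
  then have "A u + s *\<^sub>R u = z" by (simp add: cshift_def)
  with uv show ?thesis by blast
qed

lemma resolvent_bound:
  fixes A :: "'a::real_inner \<Rightarrow> 'a"
  assumes pos: "inner (A y) y \<ge> 0" and s: "s > 0" and eq: "A y + s *\<^sub>R y = s *\<^sub>R x"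
  shows "norm y \<le> norm x"
proof -
  have "inner (s *\<^sub>R x) y = inner (A y) y + s * (norm y)^2"
    by (metis eq inner_add_left inner_scaleR_left power2_norm_eq_inner)
  then have "s * (norm y)^2 \<le> s * inner x y" using pos by simp
  also have "\<dots> \<le> s * (norm x * norm y)"
    using s by (simp add: norm_cauchy_schwarz)
  finally have "norm y * norm y \<le> norm x * norm y" using s by (simp add: power2_eq_square)
  then show ?thesis
    by (cases "norm y = 0") (auto simp: mult_le_cancel_right)
qed

theorem lemma4p1:
  fixes A A1 A2 :: "'a::{real_inner,complete_space} \<Rightarrow> 'a"
    and DA DA1 DA2 :: "'a set"
    and I :: "real set" and V :: "real \<Rightarrow> 'a set" and P :: "real \<Rightarrow> 'a \<Rightarrow> 'a"
    and ip :: "real \<Rightarrow> 'a \<Rightarrow> 'a \<Rightarrow> real"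
    and Ah Ah1 Ah2 :: "real \<Rightarrow> 'a \<Rightarrow> 'a"
  assumes "condA A DA A1 DA1 A2 DA2"
    and "condP I V P A DA"
    and "condAh I V P ip Ah Ah1 Ah2 A DA A1 A2"
  shows "(\<exists>C. \<forall>h\<in>I. \<forall>x. norm (Ah h (P h (opinv DA A x))) \<le> C * norm x) \<and>
         (\<exists>C. \<forall>h\<in>I. \<forall>x. norm (Ah1 h (opinv (V h) (Ah h) (P h x))) \<le> C * norm x \<and>
                          norm (Ah2 h (opinv (V h) (Ah h) (P h x))) \<le> C * norm x)"
proof -
  note cA = assms(1)
  from assms(1) have bij: "bij_betw A DA UNIV"
    and pos: "\<forall>v\<in>DA. inner (A v) v \<ge> 0"
    and dom12: "\<forall>x. opinv DA A x \<in> DA1 \<and> opinv DA A x \<in> DA2"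
    and Asum: "\<forall>v \<in> DA1 \<inter> DA2. A v = A1 v + A2 v"
    and KA0: "\<exists>K. \<forall>x. norm (A1 (opinv DA A x)) \<le> K * norm x \<and> norm (A2 (opinv DA A x)) \<le> K * norm x"
    unfolding condA_def by blast+
  from assms(2) have Ipos: "I \<subseteq> {0<..}"
    and Pprops: "\<forall>h\<in>I. subspace (V h) \<and> (\<exists>B. finite B \<and> V h = span B) \<and>
        bounded_linear (P h) \<and> range (P h) \<subseteq> V h \<and> (\<forall>v\<in>V h. P h v = v)"
    and CP0: "\<exists>C. \<forall>h\<in>I. \<forall>v\<in>DA. norm (v - P h v) \<le> C * h^2 * norm (A v)"
    unfolding condP_def by blast+
  from assms(3) have endo: "\<forall>h\<in>I. endo_on (V h) (Ah h) \<and> endo_on (V h) (Ah1 h) \<and> endo_on (V h) (Ah2 h)"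
    and Cn0: "\<exists>C. \<forall>h\<in>I. \<forall>v\<in>V h. norm v \<le> C * ipnorm (ip h) v"
    and Ca0: "\<exists>C>0. \<forall>h\<in>I. \<forall>v\<in>V h. inner (Ah h v) v \<ge> C * (ipnorm (ip h) v)^2"
    and sumh: "\<forall>h\<in>I. \<forall>v\<in>V h. Ah h v = Ah1 h v + Ah2 h v"
    and Ce0: "\<exists>C. \<forall>h\<in>I. \<forall>x. norm (Ah1 h (P h x)) \<le> C / h^2 * norm x \<and>
                      norm (Ah2 h (P h x)) \<le> C / h^2 * norm x"
    and Cf0: "\<exists>C. \<forall>h\<in>I. \<forall>v\<in>DA. norm (P h (A1 v) - Ah1 h (P h v)) \<le> C * norm (A v) \<and>
                          norm (P h (A2 v) - Ah2 h (P h v)) \<le> C * norm (A v)"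
    and Cg0: "\<exists>C. \<forall>h\<in>I. \<forall>x. norm (opinv DA A x - opinv (V h) (Ah h) (P h x)) \<le> C * h^2 * norm x"
    unfolding condAh_def by blast+
  obtain KA where KA: "\<forall>x. norm (A1 (opinv DA A x)) \<le> KA * norm x \<and> norm (A2 (opinv DA A x)) \<le> KA * norm x"
    using KA0 by blast
  obtain CP where CP: "\<forall>h\<in>I. \<forall>v\<in>DA. norm (v - P h v) \<le> CP * h^2 * norm (A v)" using CP0 by blast
  obtain Ce where Ce: "\<forall>h\<in>I. \<forall>x. norm (Ah1 h (P h x)) \<le> Ce / h^2 * norm x \<and>
                      norm (Ah2 h (P h x)) \<le> Ce / h^2 * norm x" using Ce0 by blast
  obtain Cf where Cf: "\<forall>h\<in>I. \<forall>v\<in>DA. norm (P h (A1 v) - Ah1 h (P h v)) \<le> Cf * norm (A v) \<and>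
                          norm (P h (A2 v) - Ah2 h (P h v)) \<le> Cf * norm (A v)" using Cf0 by blast
  obtain Cg where Cg: "\<forall>h\<in>I. \<forall>x. norm (opinv DA A x - opinv (V h) (Ah h) (P h x)) \<le> Cg * h^2 * norm x"
    using Cg0 by blast
  obtain Cn where Cn: "\<forall>h\<in>I. \<forall>v\<in>V h. norm v \<le> Cn * ipnorm (ip h) v" using Cn0 by blast
  obtain Ca where Ca: "Ca > 0" "\<forall>h\<in>I. \<forall>v\<in>V h. inner (Ah h v) v \<ge> Ca * (ipnorm (ip h) v)^2"
    using Ca0 by blast
  define KA' where "KA' = max KA 0"
  define CP' where "CP' = max CP 0"
  define Ce' where "Ce' = max Ce 0"
  define Cf' where "Cf' = max Cf 0"
  define Cg' where "Cg' = max Cg 0"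
  have KA'0: "KA' \<ge> 0" and CP'0: "CP' \<ge> 0" and Ce'0: "Ce' \<ge> 0" and Cf'0: "Cf' \<ge> 0" and Cg'0: "Cg' \<ge> 0"
    by (auto simp: KA'_def CP'_def Ce'_def Cf'_def Cg'_def)
  have KA': "norm (A1 (opinv DA A x)) \<le> KA' * norm x \<and> norm (A2 (opinv DA A x)) \<le> KA' * norm x" for x
    using KA le_max0 unfolding KA'_def by (meson norm_ge_zero)
  have CP': "norm (v - P h v) \<le> CP' * (h^2 * norm (A v))" if "h \<in> I" "v \<in> DA" for h v
    using CP that le_max0[of _ CP "h^2 * norm (A v)"] unfolding CP'_def by (simp add: mult.assoc)
  have Ce': "norm (Ah1 h (P h x)) \<le> Ce' * (norm x / h^2) \<and> norm (Ah2 h (P h x)) \<le> Ce' * (norm x / h^2)"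
    if "h \<in> I" for h x
    using Ce that le_max0[of _ Ce "norm x / h^2"] unfolding Ce'_def by (simp add: field_simps)
  have Cf': "norm (P h (A1 v) - Ah1 h (P h v)) \<le> Cf' * norm (A v) \<and>
             norm (P h (A2 v) - Ah2 h (P h v)) \<le> Cf' * norm (A v)" if "h \<in> I" "v \<in> DA" for h v
    using Cf that le_max0[of _ Cf "norm (A v)"] unfolding Cf'_def by (meson norm_ge_zero)
  have Cg': "norm (opinv DA A x - opinv (V h) (Ah h) (P h x)) \<le> Cg' * (h^2 * norm x)" if "h \<in> I" for h x
    using Cg that le_max0[of _ Cg "h^2 * norm x"] unfolding Cg'_def by (simp add: mult.assoc)

  have injA: "inj_on A DA" using bij by (simp add: bij_betw_def)
  have invA: "opinv DA A x \<in> DA \<and> A (opinv DA A x) = x" for x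
    using bij unfolding opinv_def
    by (metis bij_betw_def f_the_inv_into_f_bij_betw iso_tuple_UNIV_I subsetI the_inv_into_into)
  have DAsub: "v \<in> DA1 \<and> v \<in> DA2 \<and> A v = A1 v + A2 v" if "v \<in> DA" for v
  proof -
    have "v = opinv DA A (A v)" unfolding opinv_def using the_inv_into_f_f[OF injA that] by simp
    then have "v \<in> DA1 \<and> v \<in> DA2" using dom12 by metis
    then show ?thesis using Asum by blast
  qed
  have Plin: "linear (P h)" if "h \<in> I" for h
    using Pprops that bounded_linear.linear by blast
  have PV: "P h x \<in> V h" if "h \<in> I" for h x using Pprops that by blast
  have Pid: "P h v = v" if "h \<in> I" "v \<in> V h" for h v using Pprops that by blast
  have hpos: "h > 0" if "h \<in> I" for h using Ipos that by auto
  have lin_add: "Ah1 h (x + y) = Ah1 h x + Ah1 h y" "Ah2 h (x + y) = Ah2 h x + Ah2 h y"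
    if "h \<in> I" "x \<in> V h" "y \<in> V h" for h x y
    using endo that unfolding endo_on_def lin_on_def by blast+

  define K where "K = 1 + 2 * CP' + 2 * Ce' + 4 * Cf'"
  have K0: "K \<ge> 0" using CP'0 Ce'0 Cf'0 by (simp add: K_def)
  have Pbound: "norm (P h x) \<le> K * norm x" if hI: "h \<in> I" for h x
  proof -
    have h0: "h > 0" using hpos hI .
    define s where "s = 1 / h^2"
    have s0: "s > 0" using h0 by (simp add: s_def)
    obtain y where yD: "y \<in> DA" and yeq: "A y + s *\<^sub>R y = s *\<^sub>R x"
      using resolvent_exists[OF cA s0] by blast
    have ny: "norm y \<le> norm x"
      using resolvent_bound[of A y s x] pos yD s0 yeq by blast
    have Ay: "A y = s *\<^sub>R (x - y)" using yeq by (simp add: algebra_simps)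
    have nAy: "norm (A y) \<le> 2 * s * norm x"
    proof -
      have "norm (A y) = s * norm (x - y)" using Ay s0 by simp
      also have "\<dots> \<le> s * (norm x + norm y)" using s0 norm_triangle_ineq4[of x y] by simp
      also have "\<dots> \<le> 2 * s * norm x" using s0 ny by simp
      finally show ?thesis .
    qed
    have xdec: "x = y + h^2 *\<^sub>R A y" using Ay h0 by (simp add: s_def)
    have Pxdec: "P h x = P h y + h^2 *\<^sub>R (P h (A1 y) + P h (A2 y))"
      using Plin[OF hI] DAsub[OF yD] xdec
      by (metis linear_add linear_scale)
    have b1: "norm (P h (A1 y)) \<le> (Ce' + 2 * Cf') * s * norm x"
    proof -
      have "norm (P h (A1 y)) \<le> norm (Ah1 h (P h y)) + norm (P h (A1 y) - Ah1 h (P h y))"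
        by (metis add.commute diff_add_cancel norm_triangle_ineq)
      also have "\<dots> \<le> Ce' * (norm y / h^2) + Cf' * norm (A y)"
        using Ce'[OF hI, of y] Cf'[OF hI yD] by linarith
      also have "\<dots> \<le> Ce' * (norm x / h^2) + Cf' * (2 * s * norm x)"
        using ny nAy Ce'0 Cf'0 h0
        by (intro add_mono mult_left_mono divide_right_mono) auto
      also have "\<dots> = (Ce' + 2 * Cf') * s * norm x" by (simp add: s_def algebra_simps add_divide_distrib)
      finally show ?thesis .
    qed
    have b2: "norm (P h (A2 y)) \<le> (Ce' + 2 * Cf') * s * norm x"
    proof -
      have "norm (P h (A2 y)) \<le> norm (Ah2 h (P h y)) + norm (P h (A2 y) - Ah2 h (P h y))"
        by (metis add.commute diff_add_cancel norm_triangle_ineq)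
      also have "\<dots> \<le> Ce' * (norm y / h^2) + Cf' * norm (A y)"
        using Ce'[OF hI, of y] Cf'[OF hI yD] by linarith
      also have "\<dots> \<le> Ce' * (norm x / h^2) + Cf' * (2 * s * norm x)"
        using ny nAy Ce'0 Cf'0 h0
        by (intro add_mono mult_left_mono divide_right_mono) auto
      also have "\<dots> = (Ce' + 2 * Cf') * s * norm x" by (simp add: s_def algebra_simps add_divide_distrib)
      finally show ?thesis .
    qed
    have b3: "norm (P h y) \<le> (1 + 2 * CP') * norm x"
    proof -
      have "norm (P h y) \<le> norm y + norm (y - P h y)"
        by (metis add_diff_cancel_left' diff_add_cancel norm_triangle_ineq4 norm_minus_commute) 
      also have "\<dots> \<le> norm x + CP' * (h^2 * (2 * s * norm x))"
        using ny CP'[OF hI yD] nAy CP'0 h0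
        by (smt (verit, best) mult_left_mono zero_le_power2)
      also have "\<dots> = (1 + 2 * CP') * norm x" using h0 by (simp add: s_def field_simps)
      finally show ?thesis .
    qed
    have "norm (P h x) \<le> norm (P h y) + h^2 * (norm (P h (A1 y)) + norm (P h (A2 y)))"
      unfolding Pxdec
      by (smt (verit) norm_scaleR norm_triangle_ineq abs_of_nonneg zero_le_power2 mult_left_mono)
    also have "\<dots> \<le> (1 + 2 * CP') * norm x + h^2 * (2 * ((Ce' + 2 * Cf') * s * norm x))"
      using b1 b2 b3 by (intro add_mono mult_left_mono) auto
    also have "\<dots> = K * norm x" using h0 by (simp add: s_def K_def field_simps)
    finally show ?thesis .
  qed

  have B1: "norm (Ah1 h (P h (opinv DA A x))) \<le> (K * KA' + Cf') * norm x \<and>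
            norm (Ah2 h (P h (opinv DA A x))) \<le> (K * KA' + Cf') * norm x" if hI: "h \<in> I" for h x
  proof -
    let ?v = "opinv DA A x"
    have vD: "?v \<in> DA" and Av: "A ?v = x" using invA by auto
    have "norm (Ah1 h (P h ?v)) \<le> norm (P h (A1 ?v)) + norm (P h (A1 ?v) - Ah1 h (P h ?v))"
      by (metis norm_minus_commute diff_add_cancel norm_triangle_ineq add.commute)
    also have "\<dots> \<le> K * (KA' * norm x) + Cf' * norm x"
      using Pbound[OF hI, of "A1 ?v"] KA'[of x] K0 Cf'[OF hI vD] Av
      by (smt (verit) mult_left_mono)
    finally have 1: "norm (Ah1 h (P h ?v)) \<le> (K * KA' + Cf') * norm x" by (simp add: algebra_simps)
    have "norm (Ah2 h (P h ?v)) \<le> norm (P h (A2 ?v)) + norm (P h (A2 ?v) - Ah2 h (P h ?v))"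
      by (metis norm_minus_commute diff_add_cancel norm_triangle_ineq add.commute)
    also have "\<dots> \<le> K * (KA' * norm x) + Cf' * norm x"
      using Pbound[OF hI, of "A2 ?v"] KA'[of x] K0 Cf'[OF hI vD] Av
      by (smt (verit) mult_left_mono)
    finally have 2: "norm (Ah2 h (P h ?v)) \<le> (K * KA' + Cf') * norm x" by (simp add: algebra_simps)
    show ?thesis using 1 2 by blast
  qed

  have part1: "\<exists>C. \<forall>h\<in>I. \<forall>x. norm (Ah h (P h (opinv DA A x))) \<le> C * norm x"
  proof (intro exI ballI allI)
    fix h x assume hI: "h \<in> I"
    have "Ah h (P h (opinv DA A x)) = Ah1 h (P h (opinv DA A x)) + Ah2 h (P h (opinv DA A x))"
      using sumh hI PV by blast
    then have "norm (Ah h (P h (opinv DA A x))) \<le>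
        norm (Ah1 h (P h (opinv DA A x))) + norm (Ah2 h (P h (opinv DA A x)))"
      by (simp add: norm_triangle_ineq)
    also have "\<dots> \<le> (2 * (K * KA' + Cf')) * norm x" using B1[OF hI, of x] by (simp add: algebra_simps)
    finally show "norm (Ah h (P h (opinv DA A x))) \<le> (2 * (K * KA' + Cf')) * norm x" .
  qed

  have Ahinv: "opinv (V h) (Ah h) y \<in> V h \<and> Ah h (opinv (V h) (Ah h) y) = y"
    if hI: "h \<in> I" and yV: "y \<in> V h" for h y
  proof -
    have lin: "lin_on (V h) (Ah h)" and into: "Ah h ` V h \<subseteq> V h"
      using endo hI unfolding endo_on_def by blast+
    define g where "g = (\<lambda>x. Ah h (P h x))"
    have lg: "linear g"
    proof (rule linearI)
      fix b1 b2 show "g (b1 + b2) = g b1 + g b2"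
        using lin PV[OF hI] Plin[OF hI] unfolding g_def lin_on_def by (simp add: linear_add)
    next
      fix r b show "g (r *\<^sub>R b) = r *\<^sub>R g b"
        using lin PV[OF hI] Plin[OF hI] unfolding g_def lin_on_def by (simp add: linear_scale)
    qed
    have geq: "g v = Ah h v" if "v \<in> V h" for v using Pid[OF hI that] by (simp add: g_def)
    have injAh: "inj_on (Ah h) (V h)"
    proof (rule inj_onI)
      fix a b assume a: "a \<in> V h" and b: "b \<in> V h" and e: "Ah h a = Ah h b"
      have sub: "subspace (V h)" using Pprops hI by blast
      have abV: "a - b \<in> V h" using sub a b by (simp add: subspace_diff)
      have "Ah h (a - b) = 0"
      proof -
        have "Ah h (a - b) = g (a - b)" using geq abV by simp
        also have "\<dots> = g a - g b" using lg by (simp add: linear_diff)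
        also have "\<dots> = 0" using geq a b e by simp
        finally show ?thesis .
      qed
      then have "Ca * (ipnorm (ip h) (a - b))^2 \<le> 0" using Ca(2) hI abV by fastforce
      then have "ipnorm (ip h) (a - b) = 0" using Ca(1)
        by (smt (verit) mult_pos_pos zero_less_power2)
      then have "norm (a - b) \<le> 0" using Cn hI abV by fastforce
      then show "a = b" by simp
    qed
    have injg: "inj_on g (V h)" using injAh geq by (metis inj_on_cong)
    have imgsub: "g ` V h \<subseteq> V h" using into geq by auto
    obtain B where fB: "finite B" and VB: "V h = span B" using Pprops hI by blast
    have "g ` V h = V h" by (rule fd_surj[OF lg VB fB injg imgsub])
    then have "Ah h ` V h = V h" using geq by (metis image_cong)
    then have yim: "y \<in> Ah h ` V h" using yV by simp
    show ?thesis
      unfolding opinv_def using the_inv_into_into[OF injAh yim subset_refl]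
        f_the_inv_into_f[OF injAh yim] by blast
  qed

  have part2: "\<exists>C. \<forall>h\<in>I. \<forall>x. norm (Ah1 h (opinv (V h) (Ah h) (P h x))) \<le> C * norm x \<and>
                          norm (Ah2 h (opinv (V h) (Ah h) (P h x))) \<le> C * norm x"
  proof (intro exI ballI allI)
    fix h x assume hI: "h \<in> I"
    have h0: "h > 0" using hpos hI .
    let ?u = "opinv (V h) (Ah h) (P h x)"
    let ?v = "opinv DA A x"
    have uV: "?u \<in> V h" using Ahinv[OF hI PV[OF hI]] by blast
    have Puv: "P h ?u = (P h ?u - P h ?v) + P h ?v" by simp
    have Pdiff: "P h ?u - P h ?v = P h (?u - ?v)" using Plin[OF hI] by (simp add: linear_diff)
    have nuv: "norm (?u - ?v) \<le> Cg' * (h^2 * norm x)"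
      using Cg'[OF hI, of x] by (simp add: norm_minus_commute)
    have t1: "Ce' * (norm (?u - ?v) / h^2) \<le> Ce' * Cg' * norm x"
    proof -
      have "norm (?u - ?v) / h^2 \<le> Cg' * norm x" using nuv h0 by (simp add: field_simps)
      then show ?thesis using Ce'0 by (metis mult_left_mono mult.assoc times_divide_eq_right)
    qed
    have "Ah1 h ?u = Ah1 h (P h (?u - ?v)) + Ah1 h (P h ?v)"
      using lin_add(1)[OF hI PV[OF hI] PV[OF hI], of "?u - ?v" "?v"] Pid[OF hI uV] Pdiff
      by (metis Puv)
    then have "norm (Ah1 h ?u) \<le> norm (Ah1 h (P h (?u - ?v))) + norm (Ah1 h (P h ?v))"
      by (simp add: norm_triangle_ineq)
    also have "\<dots> \<le> Ce' * Cg' * norm x + (K * KA' + Cf') * norm x"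
      using Ce'[OF hI, of "?u - ?v"] t1 B1[OF hI, of x] by linarith
    finally have 1: "norm (Ah1 h ?u) \<le> (Ce' * Cg' + K * KA' + Cf') * norm x" by (simp add: algebra_simps)
    have "Ah2 h ?u = Ah2 h (P h (?u - ?v)) + Ah2 h (P h ?v)"
      using lin_add(2)[OF hI PV[OF hI] PV[OF hI], of "?u - ?v" "?v"] Pid[OF hI uV] Pdiff
      by (metis Puv)
    then have "norm (Ah2 h ?u) \<le> norm (Ah2 h (P h (?u - ?v))) + norm (Ah2 h (P h ?v))"
      by (simp add: norm_triangle_ineq)
    also have "\<dots> \<le> Ce' * Cg' * norm x + (K * KA' + Cf') * norm x"
      using Ce'[OF hI, of "?u - ?v"] t1 B1[OF hI, of x] by linarith
    finally have 2: "norm (Ah2 h ?u) \<le> (Ce' * Cg' + K * KA' + Cf') * norm x" by (simp add: algebra_simps)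
    show "norm (Ah1 h ?u) \<le> (Ce' * Cg' + K * KA' + Cf') * norm x \<and>
          norm (Ah2 h ?u) \<le> (Ce' * Cg' + K * KA' + Cf') * norm x" using 1 2 by blast
  qed
  show ?thesis using part1 part2 by blast
qed

end
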